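(* Let $T\subset\mathbb{R}^2$ be an isosceles triangle with apex $A$, height $h$ (Euclidean distance from $A$ to the base), and let $x_0$ be the point on the axis of symmetry of $T$ at Euclidean distance $h_2$ from $A$, where $0<h_2<h$. Then $$\pi_{T,x_0}=\frac12\left(\frac{4h}{h_2}+\frac{h}{h-h_2}\right).$$ Consequently $\pi_{T,x_0}\to\infty$ as $h_2\to0^+$ or $h_2\to h^-$, $\pi_{T,x_0}$ is strictly decreasing for $0<h_2<2h/3$ and strictly increasing for $2h/3<h_2<h$, and its minimum value is $\pi_{T,x_0}=9/2$, attained exactly at $h_2=2h/3$ (the centroid), independently of the side lengths of $T$.
   Context: For a convex set $B\subset\mathbb{R}^2$ and an interior point $x_0$, $\|x\|_{B,x_0}:=\inf\{\xi>0 : x\in \xi(B-x_0)\}$. For a convex polygon $B$ with vertices $p_0,\dots,p_n=p_0$ in counterclockwise order, $\pi_{B,x_0}:=\frac12\sum_{i=1}^n\|p_i-p_{i-1}\|_{B,x_0}$ (half of the perimeter of $B$ measured by its own offset functional; when $B$ is symmetric about a line through $x_0$ this equals the clockwise value). *)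

theory Defs
  imports "HOL-Analysis.Analysis"
begin

definition gauge_fun :: "(real^2) set \<Rightarrow> real^2 \<Rightarrow> real^2 \<Rightarrow> real" where
  "gauge_fun B x0 x = Inf {\<xi>. \<xi> > 0 \<and> x \<in> (\<lambda>y. \<xi> *\<^sub>R (y - x0)) ` B}"

text \<open>Half perimeter of a convex polygon with vertices p 0, ..., p n = p 0 (counterclockwise),
  measured with its own offset functional.\<close>
definition polygon_pi :: "(real^2) set \<Rightarrow> real^2 \<Rightarrow> (nat \<Rightarrow> real^2) \<Rightarrow> nat \<Rightarrow> real" where
  "polygon_pi B x0 p n = (1/2) * (\<Sum>i=1..n. gauge_fun B x0 (p i - p (i - 1)))"

definition tri_vertices :: "real^2 \<Rightarrow> real^2 \<Rightarrow> real^2 \<Rightarrow> nat \<Rightarrow> real^2" where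
  "tri_vertices a b c i = (if i mod 3 = 0 then a else if i mod 3 = 1 then b else c)"

text \<open>Twice the signed area; positive iff a, b, c are in counterclockwise order.\<close>
definition orient :: "real^2 \<Rightarrow> real^2 \<Rightarrow> real^2 \<Rightarrow> real" where
  "orient a b c = (b - a)$1 * (c - a)$2 - (b - a)$2 * (c - a)$1"

end

theory Submission
  imports Defs "HOL-Real_Asymp.Real_Asymp"
begin


lemma indep2:
  fixes E D :: "real^2"
  assumes det: "E$1 * D$2 - E$2 * D$1 \<noteq> 0"
    and eq: "a *\<^sub>R E + b *\<^sub>R D = c *\<^sub>R E + d *\<^sub>R D"
  shows "a = c \<and> b = d"
proof -
  have e1: "(a - c) * E$1 + (b - d) * D$1 = 0"
    using arg_cong[OF eq, of "\<lambda>v. v$1"] by (simp add: algebra_simps)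
  have e2: "(a - c) * E$2 + (b - d) * D$2 = 0"
    using arg_cong[OF eq, of "\<lambda>v. v$2"] by (simp add: algebra_simps)
  have "(a - c) * (E$1 * D$2 - E$2 * D$1) = 0"
    using e1 e2 by (smt (verit) mult.commute mult.left_commute right_diff_distrib mult_minus_left)
  hence "a = c" using det by simp
  moreover have "(b - d) * (E$1 * D$2 - E$2 * D$1) = 0"
  proof -
    have "(b - d) * (E$1 * D$2 - E$2 * D$1) = - (E$2 * ((a - c) * E$1 + (b - d) * D$1)) + E$1 * ((a - c) * E$2 + (b - d) * D$2)"
      by (simp add: algebra_simps)
    thus ?thesis using e1 e2 by simp
  qed
  hence "b = d" using det by simp
  ultimately show ?thesis by simp
qed

lemma tri_char:
  fixes A E D :: "real^2"
  shows "convex hull {A, A + E - D, A + E + D} = {A + p *\<^sub>R E + q *\<^sub>R D | p q. \<bar>q\<bar> \<le> p \<and> p \<le> 1}"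
proof -
  have "convex hull {A, A + E - D, A + E + D} = {A + u *\<^sub>R (A + E - D - A) + v *\<^sub>R (A + E + D - A) | u v.  0 \<le> u \<and> 0 \<le> v \<and> u + v \<le> 1}"
    by (rule convex_hull_3_alt)
  also have "\<dots> = {A + p *\<^sub>R E + q *\<^sub>R D | p q. \<bar>q\<bar> \<le> p \<and> p \<le> 1}"
  proof (intro set_eqI iffI)
    fix x assume "x \<in> {A + u *\<^sub>R (A + E - D - A) + v *\<^sub>R (A + E + D - A) | u v.  0 \<le> u \<and> 0 \<le> v \<and> u + v \<le> 1}"
    then obtain u v where uv: "0 \<le> u" "0 \<le> v" "u + v \<le> 1" "x = A + u *\<^sub>R (A + E - D - A) + v *\<^sub>R (A + E + D - A)" by blast
    have "x = A + (u+v) *\<^sub>R E + (v - u) *\<^sub>R D" using uv(4) by (simp add: algebra_simps)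
    moreover have "\<bar>v - u\<bar> \<le> u + v" "u + v \<le> 1" using uv by auto
    ultimately show "x \<in> {A + p *\<^sub>R E + q *\<^sub>R D | p q. \<bar>q\<bar> \<le> p \<and> p \<le> 1}" by blast
  next
    fix x assume "x \<in> {A + p *\<^sub>R E + q *\<^sub>R D | p q. \<bar>q\<bar> \<le> p \<and> p \<le> 1}"
    then obtain p q where pq: "\<bar>q\<bar> \<le> p" "p \<le> 1" "x = A + p *\<^sub>R E + q *\<^sub>R D" by blast
    define u where "u = (p - q)/2"
    define v where "v = (p + q)/2"
    have i: "A + u *\<^sub>R (A + E - D - A) + v *\<^sub>R (A + E + D - A) = A + (u+v) *\<^sub>R E + (v-u) *\<^sub>R D"
      by (simp add: algebra_simps)
    have "u + v = p" "v - u = q" unfolding u_def v_def by (auto simp: field_simps)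
    hence "x = A + u *\<^sub>R (A + E - D - A) + v *\<^sub>R (A + E + D - A)"
      using pq(3) i by simp
    moreover have "0 \<le> u" "0 \<le> v" "u + v \<le> 1" using pq unfolding u_def v_def by (auto simp: field_simps)
    ultimately show "x \<in> {A + u *\<^sub>R (A + E - D - A) + v *\<^sub>R (A + E + D - A) | u v.  0 \<le> u \<and> 0 \<le> v \<and> u + v \<le> 1}" by blast
  qed
  finally show ?thesis .
qed

lemma tri_mem:
  fixes A E D :: "real^2"
  assumes det: "E$1 * D$2 - E$2 * D$1 \<noteq> 0"
  shows "A + a *\<^sub>R E + b *\<^sub>R D \<in> convex hull {A, A + E - D, A + E + D} \<longleftrightarrow> \<bar>b\<bar> \<le> a \<and> a \<le> 1"
proof
  assume "A + a *\<^sub>R E + b *\<^sub>R D \<in> convex hull {A, A + E - D, A + E + D}"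
  then obtain p q where pq: "\<bar>q\<bar> \<le> p" "p \<le> 1" "A + a *\<^sub>R E + b *\<^sub>R D = A + p *\<^sub>R E + q *\<^sub>R D"
    unfolding tri_char by blast
  have "a *\<^sub>R E + b *\<^sub>R D = p *\<^sub>R E + q *\<^sub>R D" using pq(3) by (simp add: add.assoc)
  hence "a = p \<and> b = q" using indep2[OF det] by blast
  thus "\<bar>b\<bar> \<le> a \<and> a \<le> 1" using pq by simp
next
  assume "\<bar>b\<bar> \<le> a \<and> a \<le> 1"
  thus "A + a *\<^sub>R E + b *\<^sub>R D \<in> convex hull {A, A + E - D, A + E + D}"
    unfolding tri_char by blast
qed

lemma gauge_char:
  assumes c: "c > 0" and H: "\<And>\<xi>. \<xi> > 0 \<Longrightarrow> (x0 + (1/\<xi>) *\<^sub>R x \<in> T \<longleftrightarrow> c \<le> \<xi>)"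
  shows "gauge_fun T x0 x = c"
proof -
  have im: "x \<in> (\<lambda>y. \<xi> *\<^sub>R (y - x0)) ` T \<longleftrightarrow> x0 + (1/\<xi>) *\<^sub>R x \<in> T" if "\<xi> > 0" for \<xi>
  proof
    assume "x \<in> (\<lambda>y. \<xi> *\<^sub>R (y - x0)) ` T"
    then obtain y where y: "y \<in> T" "x = \<xi> *\<^sub>R (y - x0)" by blast
    have "(1/\<xi>) *\<^sub>R x = y - x0" using y(2) that by simp
    hence "x0 + (1/\<xi>) *\<^sub>R x = y" by (simp add: algebra_simps)
    thus "x0 + (1/\<xi>) *\<^sub>R x \<in> T" using y(1) by simp
  next
    assume "x0 + (1/\<xi>) *\<^sub>R x \<in> T"
    moreover have "x = \<xi> *\<^sub>R ((x0 + (1/\<xi>) *\<^sub>R x) - x0)" using that by simp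
    ultimately show "x \<in> (\<lambda>y. \<xi> *\<^sub>R (y - x0)) ` T" by blast
  qed
  have "{\<xi>. \<xi> > 0 \<and> x \<in> (\<lambda>y. \<xi> *\<^sub>R (y - x0)) ` T} = {c..}"
    using im H c by (auto; smt (verit))
  thus ?thesis unfolding gauge_fun_def by simp
qed

lemma tri_gauges:
  fixes A E D :: "real^2"
  assumes det: "E$1 * D$2 - E$2 * D$1 \<noteq> 0" and t: "0 < \<tau>" "\<tau> < 1"
  defines "T \<equiv> convex hull {A, A + E - D, A + E + D}"
  shows "gauge_fun T (A + \<tau> *\<^sub>R E) (E - D) = 1 / (1 - \<tau>)"
    and "gauge_fun T (A + \<tau> *\<^sub>R E) (2 *\<^sub>R D) = 2 / \<tau>"
    and "gauge_fun T (A + \<tau> *\<^sub>R E) (- E - D) = 2 / \<tau>"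
proof -
  show "gauge_fun T (A + \<tau> *\<^sub>R E) (E - D) = 1 / (1 - \<tau>)"
  proof (rule gauge_char)
    fix \<xi> :: real assume xi: "\<xi> > 0"
    have eq: "A + \<tau> *\<^sub>R E + (1/\<xi>) *\<^sub>R (E - D) = A + (\<tau> + 1/\<xi>) *\<^sub>R E + (- (1/\<xi>)) *\<^sub>R D"
      by (simp add: algebra_simps)
    have iff: "(\<bar>- (1/\<xi>)\<bar> \<le> \<tau> + 1/\<xi> \<and> \<tau> + 1/\<xi> \<le> 1) \<longleftrightarrow> 1 / (1 - \<tau>) \<le> \<xi>"
      using xi t by (auto simp: field_simps)
    show "A + \<tau> *\<^sub>R E + (1/\<xi>) *\<^sub>R (E - D) \<in> T \<longleftrightarrow> 1 / (1 - \<tau>) \<le> \<xi>"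
      unfolding eq T_def tri_mem[OF det] by (rule iff)
  qed (use t in simp)
  show "gauge_fun T (A + \<tau> *\<^sub>R E) (2 *\<^sub>R D) = 2 / \<tau>"
  proof (rule gauge_char)
    fix \<xi> :: real assume xi: "\<xi> > 0"
    have eq: "A + \<tau> *\<^sub>R E + (1/\<xi>) *\<^sub>R (2 *\<^sub>R D) = A + \<tau> *\<^sub>R E + (2/\<xi>) *\<^sub>R D"
      by (simp add: algebra_simps)
    have iff: "(\<bar>2/\<xi>\<bar> \<le> \<tau> \<and> \<tau> \<le> 1) \<longleftrightarrow> 2 / \<tau> \<le> \<xi>"
      using xi t by (auto simp: field_simps)
    show "A + \<tau> *\<^sub>R E + (1/\<xi>) *\<^sub>R (2 *\<^sub>R D) \<in> T \<longleftrightarrow> 2 / \<tau> \<le> \<xi>"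
      unfolding eq T_def tri_mem[OF det] by (rule iff)
  qed (use t in simp)
  show "gauge_fun T (A + \<tau> *\<^sub>R E) (- E - D) = 2 / \<tau>"
  proof (rule gauge_char)
    fix \<xi> :: real assume xi: "\<xi> > 0"
    have eq: "A + \<tau> *\<^sub>R E + (1/\<xi>) *\<^sub>R (- E - D) = A + (\<tau> - 1/\<xi>) *\<^sub>R E + (- (1/\<xi>)) *\<^sub>R D"
      by (simp add: algebra_simps)
    have iff: "(\<bar>- (1/\<xi>)\<bar> \<le> \<tau> - 1/\<xi> \<and> \<tau> - 1/\<xi> \<le> 1) \<longleftrightarrow> 2 / \<tau> \<le> \<xi>"
    proof -
      have h: "\<tau> * \<xi> < \<xi>" using mult_strict_right_mono[of \<tau> 1 \<xi>] xi t by simp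
      show ?thesis using xi t by (auto simp: field_simps) (use h in linarith)
    qed
    show "A + \<tau> *\<^sub>R E + (1/\<xi>) *\<^sub>R (- E - D) \<in> T \<longleftrightarrow> 2 / \<tau> \<le> \<xi>"
      unfolding eq T_def tri_mem[OF det] by (rule iff)
  qed (use t in simp)
qed

lemma geom:
  fixes A B C :: "real^2" and h :: real
  assumes ccw: "orient A B C > 0"
    and isosceles: "dist A B = dist A C"
    and height: "h = infdist A (closed_segment B C)"
  shows "h = norm (midpoint B C - A)" and "h > 0"
    and "\<And>t. 0 < t \<Longrightarrow> t < h \<Longrightarrow> polygon_pi (convex hull {A, B, C}) (A + (t / h) *\<^sub>R (midpoint B C - A)) (tri_vertices A B C) 3
          = (1/2) * (4 * h / t + h / (h - t))"
proof -
  define M where "M = midpoint B C"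
  define E where "E = M - A"
  define D where "D = C - M"
  have "2 *\<^sub>R M = B + C" unfolding M_def midpoint_def by simp
  hence MM: "M + M = B + C" by (simp add: scaleR_2)
  have BE: "B = A + E - D" unfolding E_def D_def using MM by (simp add: algebra_simps)
  have CE: "C = A + E + D" unfolding E_def D_def M_def by simp
  have "orient A B C = 2 * (E$1 * D$2 - E$2 * D$1)"
    unfolding orient_def BE CE by (simp add: algebra_simps)
  hence det: "E$1 * D$2 - E$2 * D$1 \<noteq> 0" using ccw by simp
  hence E0: "E \<noteq> 0" by auto
  have "norm (E - D) = norm (E + D)" using isosceles unfolding BE CE dist_norm
    by (simp add: algebra_simps norm_minus_commute)
  hence "inner (E - D) (E - D) = inner (E + D) (E + D)" by (simp add: dot_square_norm)
  hence orth: "inner E D = 0" by (simp add: algebra_simps inner_commute)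
  have segment_nonempty_ne: "closed_segment B C \<noteq> {}" by simp
  have hE: "h = norm E"
  proof -
    have "infdist A (closed_segment B C) \<le> dist A M" unfolding M_def by (rule infdist_le) simp
    moreover have "dist A M = norm E" unfolding E_def dist_norm by (simp add: norm_minus_commute)
    moreover have "norm E \<le> infdist A (closed_segment B C)"
      unfolding infdist_notempty[OF segment_nonempty_ne]
    proof (rule cINF_greatest)
      show "closed_segment B C \<noteq> {}" by simp
      fix y assume "y \<in> closed_segment B C"
      then obtain u where u: "y = (1 - u) *\<^sub>R B + u *\<^sub>R C" unfolding closed_segment_def by blast
      have "A - y = - (E + (u + u - 1) *\<^sub>R D)" unfolding u BE CE by (simp add: vec_eq_iff algebra_simps)
      hence "dist A y = norm (E + (u + u - 1) *\<^sub>R D)" by (metis dist_norm norm_minus_cancel)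
      moreover have "(norm E)^2 \<le> (norm (E + r *\<^sub>R D))^2" for r
      proof -
        have "(norm (E + r *\<^sub>R D))^2 = (norm E)^2 + r * (r * inner D D)"
          unfolding power2_norm_eq_inner using orth
          by (simp add: algebra_simps inner_commute)
        moreover have "0 \<le> r * (r * inner D D)"
          by (metis inner_ge_zero mult.assoc mult_nonneg_nonneg zero_le_square)
        ultimately show ?thesis by simp
      qed
      ultimately show "norm E \<le> dist A y" using power2_le_imp_le by fastforce
    qed
    ultimately show ?thesis using height by linarith
  qed
  thus h1: "h = norm (midpoint B C - A)" unfolding E_def M_def .
  show hpos: "h > 0" using hE E0 by simp
  fix t assume t: "0 < t" "t < h"
  define \<tau> where "\<tau> = t / h"
  have tau: "0 < \<tau>" "\<tau> < 1" unfolding \<tau>_def using t hpos by auto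
  have T: "convex hull {A, B, C} = convex hull {A, A + E - D, A + E + D}" using BE CE by simp
  have v: "tri_vertices A B C 0 = A" "tri_vertices A B C 1 = B" "tri_vertices A B C 2 = C" "tri_vertices A B C 3 = A"
    unfolding tri_vertices_def by auto
  have s: "(\<Sum>i=1..3. f i) = f 1 + f 2 + (f 3::real)" for f :: "nat \<Rightarrow> real"
    by (simp add: numeral_3_eq_3 numeral_2_eq_2)
  have d: "B - A = E - D" "C - B = 2 *\<^sub>R D" "A - C = - E - D" unfolding BE CE by (auto simp: algebra_simps scaleR_2)
  have "polygon_pi (convex hull {A, B, C}) (A + \<tau> *\<^sub>R E) (tri_vertices A B C) 3
        = (1/2) * (1 / (1 - \<tau>) + 2 / \<tau> + 2 / \<tau>)"
    unfolding polygon_pi_def s using v d T tri_gauges[OF det tau] by simp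
  also have "\<dots> = (1/2) * (4 * h / t + h / (h - t))"
    unfolding \<tau>_def using t hpos by (simp add: field_simps)
  finally show "polygon_pi (convex hull {A, B, C}) (A + (t / h) *\<^sub>R (midpoint B C - A)) (tri_vertices A B C) 3
          = (1/2) * (4 * h / t + h / (h - t))" unfolding \<tau>_def E_def M_def .
qed


lemma dec:
  fixes h s t :: real
  assumes "0 < s" "s < t" "t < 2*h/3"
  shows "4*h/t + h/(h-t) < 4*h/s + h/(h-s)"
proof -
  have p: "s*t < 4*((h-t)*(h-s))"
  proof -
    have "t < 2*(h-t)" "s < 2*(h-s)" using assms by auto
    hence "t * s < (2*(h-t)) * (2*(h-s))" using assms by (intro mult_strict_mono) auto
    thus ?thesis by (simp add: algebra_simps)
  qed
  have h0: "h > 0" "h - t > 0" "h - s > 0" using assms by auto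
  have a: "4*h/s - 4*h/t = 4*h*(t-s)/(s*t)" using assms by (simp add: field_simps)
  have b: "h/(h-t) - h/(h-s) = h*(t-s)/((h-t)*(h-s))" using h0 by (simp add: field_simps)
  have "h*(t-s)/((h-t)*(h-s)) < 4*h*(t-s)/(s*t)"
  proof -
    have x: "h*(t-s) > 0" using h0 assms by simp
    have "h*(t-s)/((h-t)*(h-s)) = 4*h*(t-s)/(4*((h-t)*(h-s)))" by simp
    also have "\<dots> < 4*h*(t-s)/(s*t)"
      using x p assms by (intro divide_strict_left_mono) auto
    finally show ?thesis .
  qed
  thus ?thesis using a b by linarith
qed

lemma inc:
  fixes h s t :: real
  assumes "2*h/3 < s" "s < t" "t < h"
  shows "4*h/s + h/(h-s) < 4*h/t + h/(h-t)"
proof -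
  have p: "4*((h-t)*(h-s)) < s*t"
  proof -
    have "2*(h-t) < t" "2*(h-s) < s" "0 < h - t" "0 < h - s" using assms by auto
    hence "(2*(h-t)) * (2*(h-s)) < t * s" using assms by (intro mult_strict_mono) auto
    thus ?thesis by (simp add: algebra_simps)
  qed
  have h0: "h > 0" "h - t > 0" "h - s > 0" "s > 0" using assms by auto
  have a: "4*h/s - 4*h/t = 4*h*(t-s)/(s*t)" using h0 assms by (simp add: field_simps)
  have b: "h/(h-t) - h/(h-s) = h*(t-s)/((h-t)*(h-s))" using h0 by (simp add: field_simps)
  have "4*h*(t-s)/(s*t) < h*(t-s)/((h-t)*(h-s))"
  proof -
    have x: "4*h*(t-s) > 0" using h0 assms by simp
    have "4*h*(t-s)/(s*t) < 4*h*(t-s)/(4*((h-t)*(h-s)))"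
    proof (rule divide_strict_left_mono[OF p x])
      have "0 < s*t" using h0 assms by simp
      moreover have "0 < 4*((h-t)*(h-s))" using h0 by simp
      ultimately show "0 < s*t*(4*((h-t)*(h-s)))" by (rule mult_pos_pos)
    qed
    also have "\<dots> = h*(t-s)/((h-t)*(h-s))" by simp
    finally show ?thesis .
  qed
  thus ?thesis using a b by linarith
qed

lemma minval:
  fixes h t :: real
  assumes "0 < t" "t < h"
  shows "4*h/t + h/(h-t) - 9 = (2*h - 3*t)^2 / (t*(h-t))"
  using assms by (simp add: field_simps power2_eq_square)

lemma lim0:
  fixes h :: real assumes "h > 0"
  shows "filterlim (\<lambda>t. (1/2) * (4*h/t + h/(h-t))) at_top (at_right 0)"
  using assms by real_asymp

lemma limh:
  fixes h :: real assumes "h > 0"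
  shows "filterlim (\<lambda>t. (1/2) * (4*h/t + h/(h-t))) at_top (at_left h)"
  using assms by real_asymp


theorem mainTheorem9:
  fixes A B C :: "real^2" and h :: real
  assumes ccw: "orient A B C > 0"
    and isosceles: "dist A B = dist A C"
    and height: "h = infdist A (closed_segment B C)"
  defines "T \<equiv> convex hull {A, B, C}"
    and "\<Phi> \<equiv> (\<lambda>t. polygon_pi (convex hull {A, B, C}) (A + (t / h) *\<^sub>R (midpoint B C - A)) (tri_vertices A B C) 3)"
  shows "(\<forall>h2 x0. 0 < h2 \<and> h2 < h \<and> x0 \<in> closed_segment A (midpoint B C) \<and> dist A x0 = h2 \<longrightarrow>
            polygon_pi T x0 (tri_vertices A B C) 3 = (1/2) * (4 * h / h2 + h / (h - h2)))
      \<and> filterlim \<Phi> at_top (at_right 0)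
      \<and> filterlim \<Phi> at_top (at_left h)
      \<and> (\<forall>s t. 0 < s \<and> s < t \<and> t < 2 * h / 3 \<longrightarrow> \<Phi> t < \<Phi> s)
      \<and> (\<forall>s t. 2 * h / 3 < s \<and> s < t \<and> t < h \<longrightarrow> \<Phi> s < \<Phi> t)
      \<and> \<Phi> (2 * h / 3) = 9 / 2
      \<and> (\<forall>t. 0 < t \<and> t < h \<longrightarrow> 9 / 2 \<le> \<Phi> t \<and> (\<Phi> t = 9 / 2 \<longrightarrow> t = 2 * h / 3))
      \<and> A + ((2 * h / 3) / h) *\<^sub>R (midpoint B C - A) = (1/3) *\<^sub>R (A + B + C)"
  proof -
  note G = geom[OF ccw isosceles height]
  have hpos: "h > 0" by (rule G(2))
  define g where "g = (\<lambda>t::real. (1/2) * (4 * h / t + h / (h - t)))"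
  have Phi: "\<Phi> t = g t" if "0 < t" "t < h" for t
    unfolding \<Phi>_def g_def using G(3)[OF that] by simp
  have P1: "\<forall>h2 x0. 0 < h2 \<and> h2 < h \<and> x0 \<in> closed_segment A (midpoint B C) \<and> dist A x0 = h2 \<longrightarrow>
            polygon_pi T x0 (tri_vertices A B C) 3 = (1/2) * (4 * h / h2 + h / (h - h2))"
  proof (intro allI impI)
    fix h2 x0 assume a: "0 < h2 \<and> h2 < h \<and> x0 \<in> closed_segment A (midpoint B C) \<and> dist A x0 = h2"
    then obtain u where u: "0 \<le> u" "u \<le> 1" "x0 = (1 - u) *\<^sub>R A + u *\<^sub>R midpoint B C"
      unfolding closed_segment_def by blast
    have x0: "x0 = A + u *\<^sub>R (midpoint B C - A)" using u(3) by (simp add: algebra_simps)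
    have "dist A x0 = u * h" unfolding x0 G(1) dist_norm using u(1) by simp
    hence "u = h2 / h" using a hpos by (simp add: field_simps)
    thus "polygon_pi T x0 (tri_vertices A B C) 3 = (1/2) * (4 * h / h2 + h / (h - h2))"
      unfolding T_def x0 using G(3) a by simp
  qed
  have L0: "filterlim \<Phi> at_top (at_right 0)"
  proof -
    have "eventually (\<lambda>t. g t = \<Phi> t) (at_right 0)"
      using Phi hpos by (intro eventually_at_rightI[of 0 h]) auto
    hence "filterlim g at_top (at_right 0) = filterlim \<Phi> at_top (at_right 0)"
      by (intro filterlim_cong) auto
    moreover have "filterlim g at_top (at_right 0)" unfolding g_def using lim0[OF hpos] .
    ultimately show ?thesis by simp
  qed
  have Lh: "filterlim \<Phi> at_top (at_left h)"
  proof -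
    have "eventually (\<lambda>t. g t = \<Phi> t) (at_left h)"
      using Phi hpos by (intro eventually_at_leftI[of 0 h]) auto
    hence "filterlim g at_top (at_left h) = filterlim \<Phi> at_top (at_left h)"
      by (intro filterlim_cong) auto
    moreover have "filterlim g at_top (at_left h)" unfolding g_def using limh[OF hpos] .
    ultimately show ?thesis by simp
  qed
  have D: "\<forall>s t. 0 < s \<and> s < t \<and> t < 2 * h / 3 \<longrightarrow> \<Phi> t < \<Phi> s"
  proof (intro allI impI)
    fix s t :: real assume a: "0 < s \<and> s < t \<and> t < 2 * h / 3"
    hence "\<Phi> t = g t" "\<Phi> s = g s" using Phi hpos by auto
    thus "\<Phi> t < \<Phi> s" unfolding g_def using dec[of s t h] a by simp
  qed
  have I: "\<forall>s t. 2 * h / 3 < s \<and> s < t \<and> t < h \<longrightarrow> \<Phi> s < \<Phi> t"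
  proof (intro allI impI)
    fix s t :: real assume a: "2 * h / 3 < s \<and> s < t \<and> t < h"
    hence "\<Phi> t = g t" "\<Phi> s = g s" using Phi hpos by auto
    thus "\<Phi> s < \<Phi> t" unfolding g_def using inc[of h s t] a by simp
  qed
  have V: "\<Phi> (2 * h / 3) = 9 / 2"
    using Phi[of "2*h/3"] hpos unfolding g_def by (simp add: field_simps)
  have Mn: "\<forall>t. 0 < t \<and> t < h \<longrightarrow> 9 / 2 \<le> \<Phi> t \<and> (\<Phi> t = 9 / 2 \<longrightarrow> t = 2 * h / 3)"
  proof (intro allI impI)
    fix t :: real assume a: "0 < t \<and> t < h"
    have e: "\<Phi> t - 9/2 = (1/2) * ((2*h - 3*t)^2 / (t*(h-t)))"
    proof -
      have p: "\<Phi> t = (1/2)*(4*h/t + h/(h-t))" using Phi[of t] a unfolding g_def by simp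
      have m: "4*h/t + h/(h-t) - 9 = (2*h - 3*t)^2 / (t*(h-t))" using minval[of t h] a by simp
      show ?thesis unfolding p m[symmetric] by (simp add: algebra_simps)
    qed
    have pos: "t*(h-t) > 0" using a by simp
    have "0 \<le> (2*h - 3*t)^2 / (t*(h-t))" using pos by simp
    moreover have "\<Phi> t = 9/2 \<Longrightarrow> t = 2*h/3"
    proof -
      assume q: "\<Phi> t = 9/2"
      have "(1/2) * ((2*h - 3*t)^2 / (t*(h-t))) = 0" using e q by linarith
      hence "(2*h - 3*t)^2 / (t*(h-t)) = 0" by simp
      hence "(2*h - 3*t)^2 = 0" using pos a by auto
      thus "t = 2*h/3" by simp
    qed
    ultimately show "9 / 2 \<le> \<Phi> t \<and> (\<Phi> t = 9 / 2 \<longrightarrow> t = 2 * h / 3)" using e by linarith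
  qed
  have Cn: "A + ((2 * h / 3) / h) *\<^sub>R (midpoint B C - A) = (1/3) *\<^sub>R (A + B + C)"
    using hpos by (simp add: vec_eq_iff midpoint_def field_simps)
  show ?thesis using P1 L0 Lh D I V Mn Cn by blast
qed

end
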